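(* Let $F$ be a recurrent set on which there exists a positive invariant probability distribution $\pi$. Let $X\subset F$ be a finite bifix code of finite $F$-degree $d$. Then $\sum_{x\in X}|x|\,\pi(x)=d$.
   Context: $A$ is a finite alphabet. $F\subset A^*$ is recurrent if it is nonempty, closed under factors, and for all $u,w\in F$ there is $v\in F$ with $uvw\in F$. An invariant probability distribution on $F$ is a map $\pi:F\to[0,1]$ with $\pi(1)=1$ ($1$ the empty word) and, for every $w\in F$, $\sum_{a\in A,\,wa\in F}\pi(wa)=\pi(w)=\sum_{a\in A,\,aw\in F}\pi(aw)$; it is positive if $\pi(w)>0$ for all $w\in F$. A bifix code is a set of nonempty words none of which is a proper prefix or proper suffix of another. A parse of $w$ with respect to $X$ is a triple $(v,x,u)$ with $w=vxu$, $v$ having no suffix in $X$, $x\in X^*$, $u$ having no prefix in $X$; $\delta_X(w)$ is their number and $d_F(X)=\max_{w\in F}\delta_X(w)$. *)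

theory Defs
  imports Complex_Main "HOL-Library.Sublist"
begin

definition factorial_set :: "'a list set \<Rightarrow> bool" where
  "factorial_set F \<longleftrightarrow> (\<forall>w\<in>F. \<forall>u. sublist u w \<longrightarrow> u \<in> F)"

definition recurrent :: "'a list set \<Rightarrow> bool" where
  "recurrent F \<longleftrightarrow> F \<noteq> {} \<and> factorial_set F \<and>
     (\<forall>u\<in>F. \<forall>w\<in>F. \<exists>v\<in>F. u @ v @ w \<in> F)"

definition invariant_prob :: "('a::finite) list set \<Rightarrow> ('a list \<Rightarrow> real) \<Rightarrow> bool" where
  "invariant_prob F \<pi> \<longleftrightarrow>
     (\<forall>w\<in>F. 0 \<le> \<pi> w \<and> \<pi> w \<le> 1) \<and> \<pi> [] = 1 \<and>
     (\<forall>w\<in>F. (\<Sum>a\<in>{a. w @ [a] \<in> F}. \<pi> (w @ [a])) = \<pi> w \<and>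
             (\<Sum>a\<in>{a. a # w \<in> F}. \<pi> (a # w)) = \<pi> w)"

definition positive_on :: "'a list set \<Rightarrow> ('a list \<Rightarrow> real) \<Rightarrow> bool" where
  "positive_on F \<pi> \<longleftrightarrow> (\<forall>w\<in>F. \<pi> w > 0)"

definition bifix_code :: "'a list set \<Rightarrow> bool" where
  "bifix_code X \<longleftrightarrow> [] \<notin> X \<and>
     (\<forall>x\<in>X. \<forall>y\<in>X. \<not> strict_prefix x y \<and> \<not> strict_suffix x y)"

definition star :: "'a list set \<Rightarrow> 'a list set" where
  "star X = {concat xs | xs. set xs \<subseteq> X}"

definition parses :: "'a list set \<Rightarrow> 'a list \<Rightarrow> ('a list \<times> 'a list \<times> 'a list) set" where
  "parses X w = {(v, x, u). w = v @ x @ u \<and> (\<forall>s. suffix s v \<longrightarrow> s \<notin> X) \<and>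
       x \<in> star X \<and> (\<forall>p. prefix p u \<longrightarrow> p \<notin> X)}"

definition delta :: "'a list set \<Rightarrow> 'a list \<Rightarrow> nat" where
  "delta X w = card (parses X w)"

definition has_F_degree :: "'a list set \<Rightarrow> 'a list set \<Rightarrow> nat \<Rightarrow> bool" where
  "has_F_degree F X d \<longleftrightarrow> (\<forall>w\<in>F. delta X w \<le> d) \<and> (\<exists>w\<in>F. delta X w = d)"

end

theory Submission
  imports Defs
begin


lemma star_nil: "[] \<in> star X"
  unfolding star_def by (rule CollectI, rule exI[of _ "[]"]) simp

lemma star_app: "x \<in> star X \<Longrightarrow> y \<in> star X \<Longrightarrow> x @ y \<in> star X"
  unfolding star_def
proof safe
  fix xs ys assume "set xs \<subseteq> X" "set ys \<subseteq> X"
  then show "\<exists>zs. concat xs @ concat ys = concat zs \<and> set zs \<subseteq> X"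
    by (intro exI[of _ "xs @ ys"]) auto
qed

lemma star_gen: "x \<in> X \<Longrightarrow> x \<in> star X"
  unfolding star_def by (rule CollectI, rule exI[of _ "[x]"]) simp

lemma star_last:
  assumes "x \<in> star X" "x \<noteq> []" "[] \<notin> X"
  shows "\<exists>x' y. x = x' @ y \<and> x' \<in> star X \<and> y \<in> X"
proof -
  obtain xs where xs: "x = concat xs" "set xs \<subseteq> X" using assms(1) unfolding star_def by auto
  have "xs \<noteq> []" using xs assms(2) by auto
  then have "xs = butlast xs @ [last xs]" by simp
  then have "x = concat (butlast xs) @ last xs" using xs(1) by (metis concat_append concat.simps append_Nil2)
  moreover have "concat (butlast xs) \<in> star X" unfolding star_def using xs(2)
    by (auto dest: in_set_butlastD)
  moreover have "last xs \<in> X" using \<open>xs \<noteq> []\<close> xs(2) by auto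
  ultimately show ?thesis by blast
qed

lemma bifix_suffix_eq: "bifix_code X \<Longrightarrow> x \<in> X \<Longrightarrow> y \<in> X \<Longrightarrow> suffix x z \<Longrightarrow> suffix y z \<Longrightarrow> x = y"
  unfolding bifix_code_def using suffix_same_cases
  by (metis suffix_order.dual_order.not_eq_order_implies_strict)

lemma bifix_prefix_eq: "bifix_code X \<Longrightarrow> x \<in> X \<Longrightarrow> y \<in> X \<Longrightarrow> prefix x z \<Longrightarrow> prefix y z \<Longrightarrow> x = y"
  unfolding bifix_code_def using prefix_same_cases
  by (metis prefix_order.dual_order.not_eq_order_implies_strict)

lemma finite_len_le: "finite {v::('a::finite) list. length v \<le> n}"
  using finite_lists_length_le[of "UNIV::'a set" n] by simp

lemma finite_parses: "finite (parses (X::('a::finite) list set) w)"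
proof -
  have "parses X w \<subseteq> {v. length v \<le> length w} \<times> {v. length v \<le> length w} \<times> {v. length v \<le> length w}"
    unfolding parses_def by auto
  moreover have "finite {v::'a list. length v \<le> length w}" by (rule finite_len_le)
  ultimately show ?thesis by (meson finite_SigmaI finite_subset)
qed

lemma snoc_split: "u \<noteq> [] \<Longrightarrow> w @ [a] = z @ u \<Longrightarrow> \<exists>u0. u = u0 @ [a]"
  by (cases u rule: rev_cases) auto

lemma parses_snoc:
  fixes X :: "('a::finite) list set"
  assumes bf: "bifix_code X"
  shows "card (parses X (w @ [a])) = card (parses X w) + (if \<exists>s\<in>X. suffix s (w @ [a]) then 0 else 1)"
proof -
  have nil: "[] \<notin> X" using bf unfolding bifix_code_def by auto
  define h where "h = (\<lambda>(v::'a list, x::'a list, u::'a list). if u @ [a] \<in> X then (v, x @ u @ [a], []::'a list) else (v, x, u @ [a]))"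
  have inj: "inj_on h (parses X w)"
  proof (rule inj_onI)
    fix p q assume p: "p \<in> parses X w" and q: "q \<in> parses X w" and e: "h p = h q"
    obtain v1 x1 u1 where p1: "p = (v1,x1,u1)" by (cases p) auto
    obtain v2 x2 u2 where q1: "q = (v2,x2,u2)" by (cases q) auto
    have w1: "w = v1 @ x1 @ u1" and w2: "w = v2 @ x2 @ u2" using p q p1 q1 unfolding parses_def by auto
    show "p = q"
    proof (cases "u1 @ [a] \<in> X")
      case True
      note T1 = True
      show ?thesis
      proof (cases "u2 @ [a] \<in> X")
        case True
        have "v1 = v2" "x1 @ u1 @ [a] = x2 @ u2 @ [a]" using e T1 True unfolding h_def p1 q1 by auto
        moreover have "suffix (u1 @ [a]) (x1 @ u1 @ [a])" "suffix (u2 @ [a]) (x1 @ u1 @ [a])"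
          using calculation by (auto simp: suffix_def)
        then have "u1 @ [a] = u2 @ [a]" using bifix_suffix_eq[OF bf T1 True] by blast
        ultimately show ?thesis using p1 q1 by auto
      next
        case False
        then show ?thesis using e T1 unfolding h_def p1 q1 by auto
      qed
    next
      case False
      then show ?thesis using e unfolding h_def p1 q1 by (auto split: if_splits)
    qed
  qed
  define E where "E = (if \<exists>s\<in>X. suffix s (w @ [a]) then {} else {(w @ [a], []::'a list, []::'a list)})"
  have img: "parses X (w @ [a]) = h ` parses X w \<union> E"
  proof (rule set_eqI, rule iffI)
    fix t assume t: "t \<in> parses X (w @ [a])"
    obtain v x u' where t1: "t = (v,x,u')" by (cases t) auto
    have wa: "w @ [a] = v @ x @ u'" and sv: "\<forall>s. suffix s v \<longrightarrow> s \<notin> X" and xs: "x \<in> star X"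
      and pu: "\<forall>p. prefix p u' \<longrightarrow> p \<notin> X" using t t1 unfolding parses_def by auto
    show "t \<in> h ` parses X w \<union> E"
    proof (cases "u' = []")
      case False
      obtain u where u: "u' = u @ [a]" using snoc_split[of u' w a "v @ x"] wa False by auto
      have "(v,x,u) \<in> parses X w" unfolding parses_def using wa u sv xs pu
        by (auto simp: prefix_snoc)
      moreover have "u @ [a] \<notin> X" using pu u by auto
      ultimately show ?thesis unfolding h_def t1 using u by force
    next
      case True
      show ?thesis
      proof (cases "x = []")
        case True
        then have "v = w @ [a]" using wa \<open>u' = []\<close> by simp
        then show ?thesis unfolding E_def t1 using sv True \<open>u' = []\<close> by auto
      next
        case False
        obtain x' y where xy: "x = x' @ y" "x' \<in> star X" "y \<in> X" using star_last[OF xs False nil] by blast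
        have "y \<noteq> []" using xy nil by auto
        obtain u where u: "y = u @ [a]" using snoc_split[of y w a "v @ x'"] wa \<open>u' = []\<close> xy(1) \<open>y \<noteq> []\<close> by auto
        have "w = v @ x' @ u" using wa \<open>u' = []\<close> xy(1) u by simp
        moreover have "\<forall>p. prefix p u \<longrightarrow> p \<notin> X"
        proof (intro allI impI notI)
          fix p assume "prefix p u" "p \<in> X"
          then have "strict_prefix p y" using u 
          proof -
            have "strict_prefix u (u @ [a])" by (simp add: strict_prefix_def)
            then show ?thesis using \<open>prefix p u\<close> u by (metis prefix_order.le_less_trans)
          qed
          then show False using bf \<open>p \<in> X\<close> xy(3) unfolding bifix_code_def by auto
        qed
        ultimately have "(v,x',u) \<in> parses X w" unfolding parses_def using sv xy by auto
        moreover have "h (v,x',u) = t" unfolding h_def t1 using u xy \<open>u' = []\<close> by auto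
        ultimately show ?thesis by blast
      qed
    qed
  next
    fix t assume "t \<in> h ` parses X w \<union> E"
    then show "t \<in> parses X (w @ [a])"
    proof
      assume "t \<in> E"
      then show ?thesis unfolding E_def parses_def using nil star_nil by (auto split: if_splits)
    next
      assume "t \<in> h ` parses X w"
      then obtain v x u where p: "(v,x,u) \<in> parses X w" and t: "t = h (v,x,u)" by auto
      have w: "w = v @ x @ u" and sv: "\<forall>s. suffix s v \<longrightarrow> s \<notin> X" and xs: "x \<in> star X"
        and pu: "\<forall>p. prefix p u \<longrightarrow> p \<notin> X" using p unfolding parses_def by auto
      show ?thesis
      proof (cases "u @ [a] \<in> X")
        case True
        then have "t = (v, x @ u @ [a], [])" unfolding t h_def by simp
        then show ?thesis unfolding parses_def using w sv star_app[OF xs star_gen[OF True]] nil by auto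
      next
        case False
        then have "t = (v, x, u @ [a])" unfolding t h_def by simp
        then show ?thesis unfolding parses_def using w sv xs pu False by (auto simp: prefix_snoc)
      qed
    qed
  qed
  have disj: "h ` parses X w \<inter> E = {}"
  proof -
    have "(w @ [a], [], []) \<notin> h ` parses X w"
    proof
      assume "(w @ [a], [], []) \<in> h ` parses X w"
      then obtain v x u where "(v,x,u) \<in> parses X w" "h (v,x,u) = (w @ [a], [], [])" by auto
      then show False unfolding h_def by (auto split: if_splits)
    qed
    then show ?thesis unfolding E_def by auto
  qed
  have "card (parses X (w @ [a])) = card (h ` parses X w) + card E"
    unfolding img by (rule card_Un_disjoint) (use finite_parses disj E_def in auto)
  also have "\<dots> = card (parses X w) + card E" using card_image[OF inj] by simp
  finally show ?thesis unfolding E_def by auto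
qed




definition occ :: "'a list \<Rightarrow> 'a list \<Rightarrow> nat" where
  "occ x w = card {i. i + length x \<le> length w \<and> take (length x) (drop i w) = x}"

definition Occ :: "'a list set \<Rightarrow> 'a list \<Rightarrow> nat" where
  "Occ X w = (\<Sum>x\<in>X. occ x w)"

lemma suffix_drop_iff: "suffix x z \<longleftrightarrow> length x \<le> length z \<and> drop (length z - length x) z = x"
proof
  assume "suffix x z" then obtain zs where "z = zs @ x" unfolding suffix_def by auto
  then show "length x \<le> length z \<and> drop (length z - length x) z = x" by simp
next
  assume "length x \<le> length z \<and> drop (length z - length x) z = x"
  then show "suffix x z" unfolding suffix_def by (metis append_take_drop_id)
qed

lemma occ_snoc:
  assumes "x \<noteq> []"
  shows "occ x (w @ [a]) = occ x w + (if suffix x (w @ [a]) then 1 else 0)"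
proof -
  define S where "S = (\<lambda>w. {i. i + length x \<le> length w \<and> take (length x) (drop i w) = x})"
  have fin: "finite (S w)" unfolding S_def by (rule finite_subset[of _ "{..length w}"]) auto
  have eq: "S (w @ [a]) = S w \<union> (if suffix x (w @ [a]) then {Suc (length w) - length x} else {})"
  proof (rule set_eqI)
    fix i
    show "i \<in> S (w @ [a]) \<longleftrightarrow> i \<in> S w \<union> (if suffix x (w @ [a]) then {Suc (length w) - length x} else {})"
    proof (cases "i + length x \<le> length w")
      case True
      then have "take (length x) (drop i (w @ [a])) = take (length x) (drop i w)" by simp
      then show ?thesis unfolding S_def using True by auto
    next
      case False
      have "i \<in> S (w @ [a]) \<longleftrightarrow> i + length x = Suc (length w) \<and> drop i (w @ [a]) = x"
        unfolding S_def using False by auto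
      also have "\<dots> \<longleftrightarrow> suffix x (w @ [a]) \<and> i = Suc (length w) - length x"
      proof (cases "i + length x = Suc (length w)")
        case True
        then have "length (w @ [a]) - length x = i" by simp
        then show ?thesis using True by (auto simp: suffix_drop_iff)
      next
        case False
        then show ?thesis using suffix_drop_iff[of x "w @ [a]"] by auto
      qed
      finally show ?thesis unfolding S_def using False by auto
    qed
  qed
  have disj: "Suc (length w) - length x \<notin> S w" if "suffix x (w @ [a])"
  proof -
    have "length x \<le> Suc (length w)" using that suffix_drop_iff by fastforce
    then show ?thesis unfolding S_def using assms by auto
  qed
  have o: "\<And>v. occ x v = card (S v)" by (simp add: occ_def S_def)
  show ?thesis unfolding o eq using fin disj by auto
qed

lemma occ_cons:
  assumes "x \<noteq> []"
  shows "occ x (a # w) = occ x w + (if prefix x (a # w) then 1 else 0)"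
proof -
  define S where "S = (\<lambda>w. {i. i + length x \<le> length w \<and> take (length x) (drop i w) = x})"
  have fin: "finite (S w)" unfolding S_def by (rule finite_subset[of _ "{..length w}"]) auto
  have eq: "S (a # w) = Suc ` S w \<union> (if prefix x (a # w) then {0} else {})"
  proof (rule set_eqI)
    fix i
    show "i \<in> S (a # w) \<longleftrightarrow> i \<in> Suc ` S w \<union> (if prefix x (a # w) then {0} else {})"
    proof (cases i)
      case 0
      have "prefix x (a # w) \<longleftrightarrow> length x \<le> length (a # w) \<and> take (length x) (a # w) = x"
        by (metis prefix_def prefix_length_le append_eq_conv_conj)
      then show ?thesis unfolding S_def using 0 by auto
    next
      case (Suc j)
      then show ?thesis unfolding S_def by auto
    qed
  qed
  have "0 \<notin> Suc ` S w" by auto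
  moreover have o: "\<And>v. occ x v = card (S v)" by (simp add: occ_def S_def)
  ultimately show ?thesis unfolding o eq using fin
    by (auto simp: card_image)
qed

lemma card_filter_sum: "finite A \<Longrightarrow> card {x\<in>A. P x} = (\<Sum>x\<in>A. if P x then 1 else 0)"
  using sum.inter_filter[of A "\<lambda>_. 1::nat" P] by simp

lemma card_suffix_le1:
  assumes "bifix_code X" "finite X"
  shows "card {x\<in>X. suffix x z} \<le> 1"
proof -
  have fin: "finite {x\<in>X. suffix x z}" using assms by simp
  show ?thesis unfolding One_nat_def card_le_Suc0_iff_eq[OF fin] using assms(1) by (auto intro: bifix_suffix_eq)
qed

lemma card_prefix_le1:
  assumes "bifix_code X" "finite X"
  shows "card {x\<in>X. prefix x z} \<le> 1"
proof -
  have fin: "finite {x\<in>X. prefix x z}" using assms by simp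
  show ?thesis unfolding One_nat_def card_le_Suc0_iff_eq[OF fin] using assms(1) by (auto intro: bifix_prefix_eq)
qed

lemma Occ_snoc:
  assumes "bifix_code X" "finite X"
  shows "Occ X (w @ [a]) = Occ X w + card {x\<in>X. suffix x (w @ [a])}"
proof -
  have nil: "[] \<notin> X" using assms unfolding bifix_code_def by auto
  have "Occ X (w @ [a]) = (\<Sum>x\<in>X. occ x w + (if suffix x (w @ [a]) then 1 else 0))"
    unfolding Occ_def
  proof (rule sum.cong[OF refl])
    fix x assume "x \<in> X" then have "x \<noteq> []" using nil by auto
    then show "occ x (w @ [a]) = occ x w + (if suffix x (w @ [a]) then 1 else 0)" by (rule occ_snoc)
  qed
  also have "\<dots> = Occ X w + card {x\<in>X. suffix x (w @ [a])}"
    unfolding Occ_def sum.distrib card_filter_sum[OF assms(2)] by simp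
  finally show ?thesis .
qed

lemma Occ_cons:
  assumes "bifix_code X" "finite X"
  shows "Occ X (a # w) = Occ X w + card {x\<in>X. prefix x (a # w)}"
proof -
  have nil: "[] \<notin> X" using assms unfolding bifix_code_def by auto
  have "Occ X (a # w) = (\<Sum>x\<in>X. occ x w + (if prefix x (a # w) then 1 else 0))"
    unfolding Occ_def
  proof (rule sum.cong[OF refl])
    fix x assume "x \<in> X" then have "x \<noteq> []" using nil by auto
    then show "occ x (a # w) = occ x w + (if prefix x (a # w) then 1 else 0)" by (rule occ_cons)
  qed
  also have "\<dots> = Occ X w + card {x\<in>X. prefix x (a # w)}"
    unfolding Occ_def sum.distrib card_filter_sum[OF assms(2)] by simp
  finally show ?thesis .
qed

lemma delta_formula:
  fixes X :: "('a::finite) list set"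
  assumes "bifix_code X" "finite X"
  shows "delta X w + Occ X w = length w + 1"
proof (induction w rule: rev_induct)
  case Nil
  have nil: "[] \<notin> X" using assms unfolding bifix_code_def by auto
  have "parses X [] = {([], [], [])}" unfolding parses_def using nil star_nil by auto
  moreover have "Occ X [] = 0" unfolding Occ_def occ_def using nil by (intro sum.neutral) auto
  ultimately show ?case unfolding delta_def by simp
next
  case (snoc a w)
  have c: "card {x\<in>X. suffix x (w @ [a])} = (if \<exists>s\<in>X. suffix s (w @ [a]) then 1 else 0)"
  proof (cases "\<exists>s\<in>X. suffix s (w @ [a])")
    case True
    then have "{x\<in>X. suffix x (w @ [a])} \<noteq> {}" by auto
    then have "card {x\<in>X. suffix x (w @ [a])} \<noteq> 0" using assms(2) by simp
    then show ?thesis using True card_suffix_le1[OF assms, of "w @ [a]"] by simp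
  next
    case False
    then have e: "{x\<in>X. suffix x (w @ [a])} = {}" by blast
    show ?thesis unfolding e using False by (simp del: suffix_snoc)
  qed
  show ?case unfolding delta_def parses_snoc[OF assms(1)] Occ_snoc[OF assms] c
    using snoc.IH unfolding delta_def by auto
qed

lemma delta_cons_mono:
  fixes X :: "('a::finite) list set"
  assumes "bifix_code X" "finite X"
  shows "delta X w \<le> delta X (a # w)"
  using delta_formula[OF assms, of w] delta_formula[OF assms, of "a # w"] Occ_cons[OF assms, of a w]
    card_prefix_le1[OF assms, of "a # w"] by simp

lemma delta_snoc_mono:
  fixes X :: "('a::finite) list set"
  assumes "bifix_code X" "finite X"
  shows "delta X w \<le> delta X (w @ [a])"
  using delta_formula[OF assms, of w] delta_formula[OF assms, of "w @ [a]"] Occ_snoc[OF assms, of w a]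
    card_suffix_le1[OF assms, of "w @ [a]"] by simp

lemma delta_app_mono:
  fixes X :: "('a::finite) list set"
  assumes "bifix_code X" "finite X"
  shows "delta X w \<le> delta X (w @ y)"
proof (induction y rule: rev_induct)
  case Nil then show ?case by simp
next
  case (snoc a y)
  then show ?case using delta_snoc_mono[OF assms, of "w @ y" a] by simp
qed




declare finite_list_length[simp]

abbreviation W :: "nat \<Rightarrow> ('a::finite) list set" where "W n \<equiv> {w. length w = n}"

lemma W_Suc_cons: "W (Suc n) = (\<lambda>(a,w). a # w) ` (UNIV \<times> W n)"
proof (rule set_eqI)
  fix w :: "'a list"
  show "w \<in> W (Suc n) \<longleftrightarrow> w \<in> (\<lambda>(a,w). a # w) ` (UNIV \<times> W n)"
    by (cases w) auto
qed

lemma W_Suc_snoc: "W (Suc n) = (\<lambda>(w,a). w @ [a]) ` (W n \<times> UNIV)"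
proof (rule set_eqI)
  fix w :: "'a list"
  show "w \<in> W (Suc n) \<longleftrightarrow> w \<in> (\<lambda>(w,a). w @ [a]) ` (W n \<times> UNIV)"
    by (cases w rule: rev_cases) auto
qed

lemma sum_W_Suc_cons: "(\<Sum>w\<in>W (Suc n). g w) = (\<Sum>a\<in>UNIV. \<Sum>w\<in>W n. g (a # w))"
proof -
  have inj: "inj_on (\<lambda>(a,w). a # w) (UNIV \<times> W n)" by (auto simp: inj_on_def)
  have "(\<Sum>w\<in>W (Suc n). g w) = (\<Sum>p\<in>UNIV \<times> W n. g (case p of (a,w) \<Rightarrow> a # w))"
    unfolding W_Suc_cons by (subst sum.reindex[OF inj]) (simp add: comp_def)
  also have "\<dots> = (\<Sum>a\<in>UNIV. \<Sum>w\<in>W n. g (a # w))"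
    by (simp add: sum.cartesian_product split_def)
  finally show ?thesis .
qed

lemma sum_W_Suc_snoc: "(\<Sum>w\<in>W (Suc n). g w) = (\<Sum>w\<in>W n. \<Sum>a\<in>UNIV. g (w @ [a]))"
proof -
  have inj: "inj_on (\<lambda>(w,a). w @ [a]) (W n \<times> UNIV)" by (auto simp: inj_on_def)
  have "(\<Sum>w\<in>W (Suc n). g w) = (\<Sum>p\<in>W n \<times> UNIV. g (case p of (w,a) \<Rightarrow> w @ [a]))"
    unfolding W_Suc_snoc by (subst sum.reindex[OF inj]) (simp add: comp_def)
  also have "\<dots> = (\<Sum>w\<in>W n. \<Sum>a\<in>UNIV. g (w @ [a]))"
    by (simp add: sum.cartesian_product split_def)
  finally show ?thesis .
qed

definition PP :: "'a list set \<Rightarrow> ('a list \<Rightarrow> real) \<Rightarrow> 'a list \<Rightarrow> real" where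
  "PP F \<pi> w = (if w \<in> F then \<pi> w else 0)"

context
  fixes F :: "('a::finite) list set" and \<pi> :: "'a list \<Rightarrow> real"
  assumes fac: "factorial_set F" and inv: "invariant_prob F \<pi>"
begin

lemma P_right: "(\<Sum>a\<in>UNIV. PP F \<pi> (w @ [a])) = PP F \<pi> w"
proof (cases "w \<in> F")
  case True
  have "(\<Sum>a\<in>UNIV. PP F \<pi> (w @ [a])) = (\<Sum>a\<in>{a. w @ [a] \<in> F}. \<pi> (w @ [a]))"
    unfolding PP_def using sum.inter_filter[of "UNIV::'a set" "\<lambda>a. \<pi> (w @ [a])" "\<lambda>a. w @ [a] \<in> F"] by simp
  also have "\<dots> = \<pi> w" using inv True unfolding invariant_prob_def by blast
  finally show ?thesis unfolding PP_def using True by simp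
next
  case False
  have "w @ [a] \<notin> F" for a using False fac unfolding factorial_set_def by (metis sublist_append_rightI)
  then show ?thesis unfolding PP_def using False by simp
qed

lemma P_left: "(\<Sum>a\<in>UNIV. PP F \<pi> (a # w)) = PP F \<pi> w"
proof (cases "w \<in> F")
  case True
  have "(\<Sum>a\<in>UNIV. PP F \<pi> (a # w)) = (\<Sum>a\<in>{a. a # w \<in> F}. \<pi> (a # w))"
    unfolding PP_def using sum.inter_filter[of "UNIV::'a set" "\<lambda>a. \<pi> (a # w)" "\<lambda>a. a # w \<in> F"] by simp
  also have "\<dots> = \<pi> w" using inv True unfolding invariant_prob_def by blast
  finally show ?thesis unfolding PP_def using True by simp
next
  case False
  have "a # w \<notin> F" for a using False fac unfolding factorial_set_def
    by (metis append_Cons append_Nil sublist_append_leftI)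
  then show ?thesis unfolding PP_def using False by simp
qed

lemma M_drop: "j \<le> n \<Longrightarrow> (\<Sum>w\<in>W n. PP F \<pi> w * f (drop j w)) = (\<Sum>u\<in>W (n - j). PP F \<pi> u * f u)"
proof (induction j arbitrary: n)
  case 0 then show ?case by simp
next
  case (Suc j)
  then obtain m where m: "n = Suc m" "j \<le> m" by (cases n) auto
  have "(\<Sum>w\<in>W n. PP F \<pi> w * f (drop (Suc j) w)) = (\<Sum>a\<in>UNIV. \<Sum>w\<in>W m. PP F \<pi> (a # w) * f (drop j w))"
    unfolding m(1) sum_W_Suc_cons by simp
  also have "\<dots> = (\<Sum>w\<in>W m. (\<Sum>a\<in>UNIV. PP F \<pi> (a # w)) * f (drop j w))"
    by (subst sum.swap) (simp add: sum_distrib_right)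
  also have "\<dots> = (\<Sum>w\<in>W m. PP F \<pi> w * f (drop j w))" by (simp add: P_left)
  also have "\<dots> = (\<Sum>u\<in>W (m - j). PP F \<pi> u * f u)" using Suc.IH m(2) by simp
  finally show ?case using m by simp
qed

lemma M_take: "k \<le> n \<Longrightarrow> (\<Sum>w\<in>W n. PP F \<pi> w * f (take k w)) = (\<Sum>u\<in>W k. PP F \<pi> u * f u)"
proof (induction n)
  case 0 then show ?case by simp
next
  case (Suc n)
  show ?case
  proof (cases "k = Suc n")
    case True
    then show ?thesis by (intro sum.cong) auto
  next
    case False
    then have k: "k \<le> n" using Suc.prems by simp
    have "(\<Sum>w\<in>W (Suc n). PP F \<pi> w * f (take k w)) = (\<Sum>w\<in>W n. \<Sum>a\<in>UNIV. PP F \<pi> (w @ [a]) * f (take k w))"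
      unfolding sum_W_Suc_snoc by (intro sum.cong refl) (simp add: k)
    also have "\<dots> = (\<Sum>w\<in>W n. (\<Sum>a\<in>UNIV. PP F \<pi> (w @ [a])) * f (take k w))"
      by (simp add: sum_distrib_right)
    also have "\<dots> = (\<Sum>w\<in>W n. PP F \<pi> w * f (take k w))" by (simp add: P_right)
    finally show ?thesis using Suc.IH k by simp
  qed
qed

lemma nil_in: "F \<noteq> {} \<Longrightarrow> [] \<in> F"
  using fac unfolding factorial_set_def by auto

lemma sum1: "F \<noteq> {} \<Longrightarrow> (\<Sum>w\<in>W n. PP F \<pi> w) = 1"
proof -
  assume "F \<noteq> {}"
  have "(\<Sum>w\<in>W n. PP F \<pi> w * (\<lambda>_. 1) (drop n w)) = (\<Sum>u\<in>W (n - n). PP F \<pi> u * (\<lambda>_. 1) u)"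
    by (rule M_drop) simp
  also have "\<dots> = PP F \<pi> []" by simp
  also have "\<dots> = 1" using nil_in[OF \<open>F \<noteq> {}\<close>] inv unfolding PP_def invariant_prob_def by simp
  finally show ?thesis by simp
qed

lemma K: "i + length x \<le> n \<Longrightarrow>
  (\<Sum>w\<in>W n. PP F \<pi> w * (if take (length x) (drop i w) = x then 1 else 0)) = PP F \<pi> x"
proof -
  assume a: "i + length x \<le> n"
  have "(\<Sum>w\<in>W n. PP F \<pi> w * (if take (length x) (drop i w) = x then 1 else 0))
      = (\<Sum>u\<in>W (n - i). PP F \<pi> u * (if take (length x) u = x then 1 else 0))"
    using M_drop[of i n "\<lambda>u. if take (length x) u = x then 1 else 0"] a by simp
  also have "\<dots> = (\<Sum>u\<in>W (length x). PP F \<pi> u * (if u = x then 1 else 0))"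
    using M_take[of "length x" "n - i" "\<lambda>u. if u = x then 1 else 0"] a by simp
  also have "\<dots> = PP F \<pi> x"
    by (simp add: if_distrib[of "\<lambda>c. PP F \<pi> _ * c"] sum.delta cong: if_cong)
  finally show ?thesis .
qed

end




context
  fixes F :: "('a::finite) list set" and \<pi> :: "'a list \<Rightarrow> real"
  assumes fac: "factorial_set F" and inv: "invariant_prob F \<pi>"
begin

lemma occ_sum:
  assumes "length x \<le> n"
  shows "(\<Sum>w\<in>W n. PP F \<pi> w * real (occ x w)) = real (n + 1 - length x) * PP F \<pi> x"
proof -
  let ?I = "{..n - length x}"
  have ind: "real (occ x w) = (\<Sum>i\<in>?I. if take (length x) (drop i w) = x then 1 else 0)" if "w \<in> W n" for w
  proof -
    have "{i. i + length x \<le> length w \<and> take (length x) (drop i w) = x} = {i\<in>?I. take (length x) (drop i w) = x}"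
      using that assms by auto
    then have "occ x w = card {i\<in>?I. take (length x) (drop i w) = x}"
      unfolding occ_def by simp
    also have "\<dots> = (\<Sum>i\<in>?I. if take (length x) (drop i w) = x then 1 else 0)"
      by (rule card_filter_sum) simp
    finally have "occ x w = (\<Sum>i\<in>?I. if take (length x) (drop i w) = x then 1 else 0)" .
    then show ?thesis by (auto simp: of_nat_sum intro!: sum.cong)
  qed
  have "(\<Sum>w\<in>W n. PP F \<pi> w * real (occ x w))
      = (\<Sum>w\<in>W n. \<Sum>i\<in>?I. PP F \<pi> w * (if take (length x) (drop i w) = x then 1 else 0))"
    by (intro sum.cong refl) (simp add: ind sum_distrib_left)
  also have "\<dots> = (\<Sum>i\<in>?I. \<Sum>w\<in>W n. PP F \<pi> w * (if take (length x) (drop i w) = x then 1 else 0))"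
    by (rule sum.swap)
  also have "\<dots> = (\<Sum>i\<in>?I. PP F \<pi> x)"
    by (intro sum.cong refl K[OF fac inv]) (use assms in auto)
  also have "\<dots> = real (n + 1 - length x) * PP F \<pi> x" using assms by simp
  finally show ?thesis .
qed

lemma E_formula:
  fixes X :: "'a list set"
  assumes bf: "bifix_code X" and fX: "finite X" and XF: "X \<subseteq> F" and L: "\<forall>x\<in>X. length x \<le> n"
    and Fne: "F \<noteq> {}"
  shows "(\<Sum>w\<in>W n. PP F \<pi> w * real (delta X w))
     = real (n + 1) * (1 - (\<Sum>x\<in>X. \<pi> x)) + (\<Sum>x\<in>X. real (length x) * \<pi> x)"
proof -
  have d: "real (delta X w) = real (n + 1) - (\<Sum>x\<in>X. real (occ x w))" if "w \<in> W n" for w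
  proof -
    have "delta X w + Occ X w = n + 1" using delta_formula[OF bf fX, of w] that by simp
    then have "real (delta X w) = real (n + 1) - real (Occ X w)" by linarith
    then show ?thesis unfolding Occ_def by (simp add: of_nat_sum)
  qed
  have "(\<Sum>w\<in>W n. PP F \<pi> w * real (delta X w))
      = (\<Sum>w\<in>W n. real (n + 1) * PP F \<pi> w - (\<Sum>x\<in>X. PP F \<pi> w * real (occ x w)))"
    by (intro sum.cong refl) (simp add: d right_diff_distrib sum_distrib_left)
  also have "\<dots> = real (n + 1) * (\<Sum>w\<in>W n. PP F \<pi> w) - (\<Sum>x\<in>X. \<Sum>w\<in>W n. PP F \<pi> w * real (occ x w))"
    by (simp add: sum_subtractf sum_distrib_left sum.swap[of _ "W n" X])
  also have "\<dots> = real (n + 1) - (\<Sum>x\<in>X. real (n + 1 - length x) * \<pi> x)"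
  proof -
    have "(\<Sum>x\<in>X. \<Sum>w\<in>W n. PP F \<pi> w * real (occ x w)) = (\<Sum>x\<in>X. real (n + 1 - length x) * \<pi> x)"
    proof (rule sum.cong[OF refl])
      fix x assume x: "x \<in> X"
      have "(\<Sum>w\<in>W n. PP F \<pi> w * real (occ x w)) = real (n + 1 - length x) * PP F \<pi> x"
        by (rule occ_sum) (use L x in auto)
      then show "(\<Sum>w\<in>W n. PP F \<pi> w * real (occ x w)) = real (n + 1 - length x) * \<pi> x"
        using XF x unfolding PP_def by auto
    qed
    then show ?thesis using sum1[OF fac inv Fne, of n] by simp
  qed
  also have "\<dots> = real (n + 1) - (\<Sum>x\<in>X. real (n + 1) * \<pi> x - real (length x) * \<pi> x)"
  proof -
    have "real (n + 1 - length x) * \<pi> x = real (n + 1) * \<pi> x - real (length x) * \<pi> x" if "x \<in> X" for x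
    proof -
      have "length x \<le> n + 1" using L that by auto
      then show ?thesis by (simp add: of_nat_diff left_diff_distrib)
    qed
    then show ?thesis by (simp cong: sum.cong)
  qed
  also have "\<dots> = real (n + 1) * (1 - (\<Sum>x\<in>X. \<pi> x)) + (\<Sum>x\<in>X. real (length x) * \<pi> x)"
    by (simp add: sum_subtractf sum_distrib_left right_diff_distrib)
  finally show ?thesis .
qed

end




theorem mainTheorem6:
  fixes F X :: "('a::finite) list set" and \<pi> :: "'a list \<Rightarrow> real" and d :: nat
  assumes "recurrent F"
    and "invariant_prob F \<pi>" and "positive_on F \<pi>"
    and "X \<subseteq> F" and "finite X" and "bifix_code X"
    and "has_F_degree F X d"
  shows "(\<Sum>x\<in>X. real (length x) * \<pi> x) = real d"
proof -
  note rec = assms(1) and inv = assms(2) and pos = assms(3) and XF = assms(4) and fX = assms(5)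
    and bf = assms(6) and deg = assms(7)
  have fac: "factorial_set F" and Fne: "F \<noteq> {}" using rec unfolding recurrent_def by auto
  define L where "L = Max (insert 0 (length ` X))"
  have L: "\<forall>x\<in>X. length x \<le> L" unfolding L_def using fX by (auto intro: Max_ge)
  define P where "P = PP F \<pi>"
  define E where "E = (\<lambda>n. \<Sum>w\<in>W n. P w * real (delta X w))"
  define c where "c = 1 - (\<Sum>x\<in>X. \<pi> x)"
  define S where "S = (\<Sum>x\<in>X. real (length x) * \<pi> x)"
  have Ef: "E n = real (n + 1) * c + S" if "L \<le> n" for n
    unfolding E_def P_def c_def S_def
    by (rule E_formula[OF fac inv bf fX XF _ Fne]) (use L that in auto)
  have Pnn: "P w \<ge> 0" for w using inv unfolding P_def PP_def invariant_prob_def by auto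
  have Ple: "P w * real (delta X w) \<le> P w * real d" for w
  proof (cases "w \<in> F")
    case True
    then have "delta X w \<le> d" using deg unfolding has_F_degree_def by auto
    then show ?thesis using Pnn[of w] by (simp add: mult_left_mono)
  next
    case False then show ?thesis unfolding P_def PP_def by simp
  qed
  have Ebd: "E n \<le> real d" for n
  proof -
    have "E n \<le> (\<Sum>w\<in>W n. P w * real d)" unfolding E_def by (rule sum_mono) (rule Ple)
    also have "\<dots> = real d" using sum1[OF fac inv Fne, of n] unfolding P_def
      by (simp add: sum_distrib_right[symmetric])
    finally show ?thesis .
  qed
  have Ediff: "E (Suc n) - E n = (\<Sum>a\<in>UNIV. \<Sum>w\<in>W n. P (a # w) * (real (delta X (a # w)) - real (delta X w)))" for n
  proof -
    have "E (Suc n) = (\<Sum>a\<in>UNIV. \<Sum>w\<in>W n. P (a # w) * real (delta X (a # w)))"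
      unfolding E_def by (rule sum_W_Suc_cons)
    moreover have "E n = (\<Sum>a\<in>UNIV. \<Sum>w\<in>W n. P (a # w) * real (delta X w))"
    proof -
      have "(\<Sum>a\<in>UNIV. \<Sum>w\<in>W n. P (a # w) * real (delta X w)) = (\<Sum>w\<in>W n. (\<Sum>a\<in>UNIV. P (a # w)) * real (delta X w))"
        by (subst sum.swap) (simp add: sum_distrib_right)
      also have "\<dots> = E n" unfolding E_def P_def using P_left[OF fac inv] by simp
      finally show ?thesis by simp
    qed
    ultimately show ?thesis by (simp add: sum_subtractf right_diff_distrib)
  qed
  have terms_nn: "0 \<le> P (a # w) * (real (delta X (a # w)) - real (delta X w))" for a w
    using Pnn[of "a # w"] delta_cons_mono[OF bf fX, of w a] by simp
  have Emono: "E n \<le> E (Suc n)" for n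
  proof -
    have "0 \<le> E (Suc n) - E n" unfolding Ediff by (intro sum_nonneg terms_nn)
    then show ?thesis by simp
  qed
  have c_nn: "c \<ge> 0" using Emono[of L] Ef[of L] Ef[of "Suc L"] by (simp add: algebra_simps)
  have c0: "c = 0"
  proof (rule ccontr)
    assume "c \<noteq> 0" then have "c > 0" using c_nn by simp
    then obtain m where m: "real d - S < real m * c" using ex_less_of_nat_mult by blast
    have "real m * c \<le> real (m + L + 1) * c" using \<open>c > 0\<close> by (simp add: mult_right_mono)
    then have "E (m + L) > real d" using Ef[of "m + L"] m by (simp add: algebra_simps)
    then show False using Ebd[of "m + L"] by simp
  qed
  have step: "delta X (a # w) = delta X w" if "a # w \<in> F" "L \<le> length w" for a w
  proof -
    let ?n = "length w"
    have "E (Suc ?n) - E ?n = 0" using Ef[of ?n] Ef[of "Suc ?n"] that(2) c0 by simp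
    then have "(\<Sum>a\<in>UNIV. \<Sum>w\<in>W ?n. P (a # w) * (real (delta X (a # w)) - real (delta X w))) = 0"
      using Ediff by simp
    then have "\<forall>a\<in>UNIV. (\<Sum>w\<in>W ?n. P (a # w) * (real (delta X (a # w)) - real (delta X w))) = 0"
      by (subst (asm) sum_nonneg_eq_0_iff) (auto intro: sum_nonneg terms_nn)
    then have "(\<Sum>w'\<in>W ?n. P (a # w') * (real (delta X (a # w')) - real (delta X w'))) = 0" by simp
    then have "\<forall>w'\<in>W ?n. P (a # w') * (real (delta X (a # w')) - real (delta X w')) = 0"
      by (subst (asm) sum_nonneg_eq_0_iff) (auto intro: terms_nn)
    then have "P (a # w) * (real (delta X (a # w)) - real (delta X w)) = 0" by simp
    moreover have "P (a # w) > 0" using pos that(1) unfolding P_def PP_def positive_on_def by auto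
    ultimately show ?thesis by simp
  qed
  have app: "delta X (y @ w) = delta X w" if "y @ w \<in> F" "L \<le> length w" for y w
    using that
  proof (induction y)
    case Nil then show ?case by simp
  next
    case (Cons a y)
    have "y @ w \<in> F" using Cons.prems(1) fac unfolding factorial_set_def
      by (metis append_Cons append_Nil sublist_append_leftI)
    then have "delta X (y @ w) = delta X w" using Cons.IH Cons.prems(2) by simp
    moreover have "delta X (a # (y @ w)) = delta X (y @ w)"
      using step[of a "y @ w"] Cons.prems by simp
    ultimately show ?case by simp
  qed
  obtain w0 where w0: "w0 \<in> F" "delta X w0 = d" using deg unfolding has_F_degree_def by auto
  have allD: "delta X w = d" if wF: "w \<in> F" and wL: "L \<le> length w" for w
  proof -
    have R: "\<forall>u\<in>F. \<forall>w\<in>F. \<exists>v\<in>F. u @ v @ w \<in> F" using rec unfolding recurrent_def by simp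
    obtain v where "v \<in> F" "w0 @ v @ w \<in> F" using bspec[OF bspec[OF R w0(1)] wF] by blast
    then have z: "(w0 @ v) @ w \<in> F" by simp
    have "d \<le> delta X ((w0 @ v) @ w)" using delta_app_mono[OF bf fX, of w0 "v @ w"] w0(2) by simp
    moreover have "delta X ((w0 @ v) @ w) \<le> d" using deg z unfolding has_F_degree_def by auto
    moreover have "delta X ((w0 @ v) @ w) = delta X w" by (rule app[OF z wL])
    ultimately show ?thesis by simp
  qed
  have "E L = real d"
  proof -
    have "E L = (\<Sum>w\<in>W L. P w * real d)" unfolding E_def
    proof (rule sum.cong[OF refl])
      fix w :: "'a list" assume "w \<in> W L"
      then show "P w * real (delta X w) = P w * real d"
        using allD[of w] unfolding P_def PP_def by auto
    qed
    also have "\<dots> = real d" using sum1[OF fac inv Fne, of L] unfolding P_def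
      by (simp add: sum_distrib_right[symmetric])
    finally show ?thesis .
  qed
  then show ?thesis using Ef[of L] c0 unfolding S_def by simp
qed


end
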